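(* Let $\Gamma$ be a finitely generated semigroup with identity $e$ and $\rho:\Gamma\to\mathrm{End}(G)$ an endomorphism action with $\rho(e)=\mathrm{Id}$ on a solenoid $G$. Then every $\rho$-basis of $\widehat G$ is $k$-regular for some positive integer $k$.
   Context: A solenoid is a compact connected finite-dimensional metrizable abelian group (dual $\widehat G$ torsion-free of finite rank). $\widehat\rho(\gamma)(\chi)=\chi\circ\rho(\gamma)$. A $\rho$-basis is a set $A\subset\widehat G$ generating $\widehat G$ as an abelian group with $A=\bigcup_{\gamma}\widehat\rho(\gamma)(F)$ for some finite $F\subset\widehat G$. For a discrete abelian group $H$ (written additively), a subset $B\subset H$ and $k>0$, $\mathbf Q_k(B)$ is the set of $h\in H$ satisfying an equation $n_0h=\sum_{j=1}^r n_ja_j$ with $a_1,\dots,a_r\in B$, integers $n_0\ne 0,n_1,\dots,n_r$, and $|n_0|+|n_1|+\cdots+|n_r|\le k$. A set $A\subset H$ is $k$-regular if there is an increasing sequence of finite sets $A_1\subset A_2\subset\cdots\subset A$ with $\bigcup_i A_i=A$ and $A_n\subset\mathbf Q_k(A_{n-1})$ for all $n\ge2$. *)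

theory Defs
  imports Main "HOL-Library.Countable_Set"
begin

text \<open>The discrete abelian group \<open>H\<close> (playing the role of the dual group of the solenoid)
  is modelled as a type of class \<open>ab_group_add\<close>; \<open>zmult n x\<close> is the integer multiple \<open>n x\<close>.\<close>

definition zmult :: "int \<Rightarrow> 'a::ab_group_add \<Rightarrow> 'a" where
  "zmult n x = (if 0 \<le> n then (((+) x) ^^ nat n) 0 else - ((((+) x) ^^ nat (- n)) 0))"

definition lincomb :: "(int \<times> 'a::ab_group_add) list \<Rightarrow> 'a" where
  "lincomb ps = sum_list (map (\<lambda>(n, a). zmult n a) ps)"

definition zspan :: "'a::ab_group_add set \<Rightarrow> 'a set" where
  "zspan B = {lincomb ps | ps. set (map snd ps) \<subseteq> B}"

definition torsion_free :: "'a::ab_group_add itself \<Rightarrow> bool" where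
  "torsion_free _ \<longleftrightarrow> (\<forall>(n::int) (x::'a). n \<noteq> 0 \<longrightarrow> zmult n x = 0 \<longrightarrow> x = 0)"

definition finite_rank :: "'a::ab_group_add itself \<Rightarrow> bool" where
  "finite_rank _ \<longleftrightarrow> (\<exists>X::'a set. finite X \<and> (\<forall>h. \<exists>n::int. n \<noteq> 0 \<and> zmult n h \<in> zspan X))"

definition solenoid_dual :: "'a::ab_group_add itself \<Rightarrow> bool" where
  "solenoid_dual T \<longleftrightarrow> countable (UNIV :: 'a set) \<and> torsion_free T \<and> finite_rank T"

definition finitely_generated_monoid :: "'g::monoid_mult itself \<Rightarrow> bool" where
  "finitely_generated_monoid _ \<longleftrightarrow>
     (\<exists>S::'g set. finite S \<and> (\<forall>g. \<exists>xs. set xs \<subseteq> S \<and> g = prod_list xs))"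

text \<open>Dual action \<open>\<rho>^(\<gamma>)(\<chi>) = \<chi> \<circ> \<rho>(\<gamma>)\<close> of an endomorphism action
  \<open>\<rho>\<close> with \<open>\<rho>(e) = Id\<close> and \<open>\<rho>(\<gamma>\<delta>) = \<rho>(\<gamma>) \<circ> \<rho>(\<delta>)\<close>:
  each \<open>\<rho>^(\<gamma>)\<close> is an endomorphism, \<open>\<rho>^(e) = id\<close>, \<open>\<rho>^(\<gamma>\<delta>) = \<rho>^(\<delta>) \<circ> \<rho>^(\<gamma>)\<close>.\<close>
definition dual_endo_action :: "('g::monoid_mult \<Rightarrow> 'a::ab_group_add \<Rightarrow> 'a) \<Rightarrow> bool" where
  "dual_endo_action rh \<longleftrightarrow>
     (\<forall>g x y. rh g (x + y) = rh g x + rh g y) \<and>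
     rh 1 = id \<and>
     (\<forall>g d. rh (g * d) = rh d \<circ> rh g)"

definition rho_basis :: "('g \<Rightarrow> 'a::ab_group_add \<Rightarrow> 'a) \<Rightarrow> 'a set \<Rightarrow> bool" where
  "rho_basis rh A \<longleftrightarrow> zspan A = UNIV \<and>
     (\<exists>F. finite F \<and> A = (\<Union>g. rh g ` F))"

definition Qk :: "nat \<Rightarrow> 'a::ab_group_add set \<Rightarrow> 'a set" where
  "Qk k B = {h. \<exists>(n0::int) ps. n0 \<noteq> 0 \<and> set (map snd ps) \<subseteq> B \<and>
                 zmult n0 h = lincomb ps \<and>
                 \<bar>n0\<bar> + sum_list (map (\<lambda>p. \<bar>fst p\<bar>) ps) \<le> int k}"

text \<open>\<open>A i\<close> here is \<open>A_{i+1}\<close> of the paper.\<close>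
definition k_regular :: "nat \<Rightarrow> 'a::ab_group_add set \<Rightarrow> bool" where
  "k_regular k A \<longleftrightarrow> (\<exists>As :: nat \<Rightarrow> 'a set.
     (\<forall>i. finite (As i)) \<and> (\<forall>i. As i \<subseteq> As (Suc i)) \<and> (\<forall>i. As i \<subseteq> A) \<and>
     (\<Union>i. As i) = A \<and> (\<forall>i. As (Suc i) \<subseteq> Qk k (As i)))"

end

theory Submission
  imports Defs
begin

definition natm :: "nat \<Rightarrow> 'a::ab_group_add \<Rightarrow> 'a" where
  "natm n x = (((+) x) ^^ n) 0"

lemma natm_Suc: "natm (Suc n) x = natm n x + x"
  by (simp add: natm_def add.commute)

lemma natm_0[simp]: "natm 0 x = 0" by (simp add: natm_def)

lemma zmult_natm: "zmult n x = (if 0 \<le> n then natm (nat n) x else - natm (nat (-n)) x)"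
  by (simp add: zmult_def natm_def)

lemma zmult_plus1: "zmult (n + 1) x = zmult n x + x"
proof (cases "0 \<le> n")
  case True
  then have "nat (n+1) = Suc (nat n)" by simp
  then show ?thesis using True by (simp add: zmult_natm natm_Suc)
next
  case False
  show ?thesis
  proof (cases "n = -1")
    case True then show ?thesis by (simp add: zmult_natm natm_def)
  next
    case False2: False
    then have "nat (-n) = Suc (nat (-(n+1)))" using False by simp
    then show ?thesis using False False2 by (simp add: zmult_natm natm_Suc)
  qed
qed

lemma zmult_0[simp]: "zmult 0 x = 0" by (simp add: zmult_def)
lemma zmult_1[simp]: "zmult 1 x = x"
  using zmult_plus1[of 0 x] by simp

lemma zmult_minus1: "zmult (n - 1) x = zmult n x - x"
  using zmult_plus1[of "n - 1" x] by simp

lemma zmult_add: "zmult (m + n) x = zmult m x + zmult n x"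
proof (induction m rule: int_induct[where k=0])
  case base then show ?case by simp
next
  case (step1 i)
  have "zmult (i + 1 + n) x = zmult (i + n + 1) x" by (simp add: ac_simps)
  also have "\<dots> = zmult (i+n) x + x" by (rule zmult_plus1)
  finally show ?case using step1 by (simp add: zmult_plus1)
next
  case (step2 i)
  have "zmult (i - 1 + n) x = zmult (i + n - 1) x" by (rule arg_cong[where f="\<lambda>m. zmult m x"]) simp
  also have "\<dots> = zmult (i+n) x - x" by (rule zmult_minus1)
  finally show ?case using step2 by (simp only: zmult_minus1) (simp add: algebra_simps)
qed

lemma zmult_neg: "zmult (- n) x = - zmult n x"
  using zmult_add[of n "-n" x] by (simp add: eq_neg_iff_add_eq_0 add.commute)

lemma hom_zmult:
  assumes "\<And>x y. f (x + y) = f x + f y"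
  shows "f (zmult n x) = zmult n (f x)"
proof -
  have f0: "f 0 = 0" using assms[of 0 0] by simp
  have fneg: "f (- y) = - f y" for y
    using assms[of "-y" y] f0 by (simp add: eq_neg_iff_add_eq_0)
  show ?thesis
  proof (induction n rule: int_induct[where k=0])
    case base then show ?case using f0 by simp
  next
    case (step1 i) then show ?case by (simp add: zmult_plus1 assms)
  next
    case (step2 i) then show ?case by (simp only: zmult_minus1) (simp only: diff_conv_add_uminus assms fneg)
  qed
qed

lemma zmult_add_right: "zmult n (x + y) = zmult n x + zmult n y"
proof (induction n rule: int_induct[where k=0])
  case base then show ?case by simp
next
  case (step1 i) then show ?case by (simp only: zmult_plus1) (simp add: ac_simps)
next
  case (step2 i) then show ?case by (simp only: zmult_minus1) (simp add: algebra_simps)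
qed

lemma zmult_zero_right[simp]: "zmult n 0 = 0"
  using zmult_add_right[of n 0 0] by simp

lemma zmult_mult: "zmult (m * n) x = zmult m (zmult n x)"
proof (induction m rule: int_induct[where k=0])
  case base then show ?case by simp
next
  case (step1 i) then show ?case by (simp add: zmult_plus1 zmult_add distrib_right)
next
  case (step2 i)
  have "zmult ((i - 1) * n) x = zmult (i * n + (- n)) x" by (rule arg_cong[where f="\<lambda>m. zmult m x"]) (simp add: algebra_simps)
  also have "\<dots> = zmult (i * n) x - zmult n x" by (simp only: zmult_add zmult_neg) simp
  finally show ?case using step2 by (simp only: zmult_minus1)
qed

lemma zmult_sum_right: "zmult n (sum f B) = (\<Sum>b\<in>B. zmult n (f b))"
  by (induction B rule: infinite_finite_induct) (simp_all add: zmult_add_right)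

lemma zmult_sum_left: "zmult (sum f B) x = (\<Sum>b\<in>B. zmult (f b) x)"
  by (induction B rule: infinite_finite_induct) (simp_all add: zmult_add)

lemma lincomb_Nil[simp]: "lincomb [] = 0" by (simp add: lincomb_def)
lemma lincomb_Cons[simp]: "lincomb ((n,a)#ps) = zmult n a + lincomb ps"
  by (simp add: lincomb_def)

lemma hom_lincomb:
  assumes "\<And>x y. f (x + y) = f x + f y"
  shows "f (lincomb ps) = lincomb (map (\<lambda>(n,a). (n, f a)) ps)"
proof -
  have f0: "f 0 = 0" using assms[of 0 0] by simp
  show ?thesis
    by (induction ps) (auto simp: f0 assms hom_zmult[OF assms])
qed

lemma Qk_hom:
  assumes "\<And>x y. f (x + y) = f x + f y" and "h \<in> Qk k B"
  shows "f h \<in> Qk k (f ` B)"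
proof -
  obtain n0 ps where ps: "n0 \<noteq> 0" "set (map snd ps) \<subseteq> B" "zmult n0 h = lincomb ps"
    "\<bar>n0\<bar> + sum_list (map (\<lambda>p. \<bar>fst p\<bar>) ps) \<le> int k"
    using assms(2) unfolding Qk_def by blast
  let ?ps = "map (\<lambda>(n,a). (n, f a)) ps"
  have eqm: "map (\<lambda>p. \<bar>fst p\<bar>) ?ps = map (\<lambda>p. \<bar>fst p\<bar>) ps" by (induction ps) auto
  have "\<bar>n0\<bar> + sum_list (map (\<lambda>p. \<bar>fst p\<bar>) ?ps) \<le> int k" unfolding eqm by (rule ps(4))
  moreover have "set (map snd ?ps) \<subseteq> f ` B" using ps(2) by auto
  moreover have "zmult n0 (f h) = lincomb ?ps"
  proof -
    have "zmult n0 (f h) = f (zmult n0 h)" by (rule hom_zmult[OF assms(1), symmetric])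
    also have "\<dots> = f (lincomb ps)" using ps(3) by simp
    also have "\<dots> = lincomb ?ps" by (rule hom_lincomb[OF assms(1)])
    finally show ?thesis .
  qed
  ultimately show ?thesis using ps unfolding Qk_def
    by (intro CollectI exI[of _ n0] exI[of _ ?ps] conjI) auto
qed

lemma Qk_mono: "k \<le> k' \<Longrightarrow> B \<subseteq> B' \<Longrightarrow> Qk k B \<subseteq> Qk k' B'"
  unfolding Qk_def by fastforce

lemma int_dep:
  fixes d :: "'i \<Rightarrow> 'x \<Rightarrow> int"
  assumes "finite X" "finite I" "card X < card I"
  shows "\<exists>c. (\<exists>i\<in>I. c i \<noteq> 0) \<and> (\<forall>x\<in>X. (\<Sum>i\<in>I. c i * d i x) = 0)"
  using assms
proof (induction X arbitrary: I d rule: finite_induct)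
  case empty
  then obtain i where "i \<in> I" by fastforce
  then show ?case by (intro exI[of _ "\<lambda>_. 1"]) auto
next
  case (insert x X)
  show ?case
  proof (cases "\<forall>i\<in>I. d i x = 0")
    case True
    have "card X < card I" using insert by simp
    then obtain c where c: "\<exists>i\<in>I. c i \<noteq> 0" "\<forall>y\<in>X. (\<Sum>i\<in>I. c i * d i y) = 0"
      using insert.IH[of I d] insert.prems by blast
    then show ?thesis using True by (intro exI[of _ c]) auto
  next
    case False
    then obtain i0 where i0: "i0 \<in> I" "d i0 x \<noteq> 0" by blast
    define I' where "I' = I - {i0}"
    define d' where "d' i y = d i0 x * d i y - d i x * d i0 y" for i y
    have "card I' = card I - 1" using i0 insert.prems by (simp add: I'_def)
    then have "card X < card I'" using insert by simp
    moreover have "finite I'" using insert.prems by (simp add: I'_def)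
    ultimately obtain c' where c': "\<exists>i\<in>I'. c' i \<noteq> 0" "\<forall>y\<in>X. (\<Sum>i\<in>I'. c' i * d' i y) = 0"
      using insert.IH[of I' d'] by blast
    define c where "c i = (if i = i0 then - (\<Sum>j\<in>I'. c' j * d j x) else d i0 x * c' i)" for i
    have key: "(\<Sum>i\<in>I. c i * d i y) = (\<Sum>i\<in>I'. c' i * d' i y)" for y
    proof -
      have "(\<Sum>i\<in>I. c i * d i y) = c i0 * d i0 y + (\<Sum>i\<in>I'. c i * d i y)"
        unfolding I'_def using i0 insert.prems by (simp add: sum.remove)
      also have "(\<Sum>i\<in>I'. c i * d i y) = (\<Sum>i\<in>I'. d i0 x * c' i * d i y)"
        by (rule sum.cong) (auto simp: c_def I'_def)
      also have "c i0 * d i0 y = (\<Sum>j\<in>I'. - (c' j * d j x * d i0 y))"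
        by (simp add: c_def sum_distrib_right sum_negf)
      finally show ?thesis
        by (simp add: d'_def sum.distrib[symmetric] algebra_simps sum_subtractf)
    qed
    show ?thesis
    proof (intro exI[of _ c] conjI)
      obtain i where "i \<in> I'" "c' i \<noteq> 0" using c' by blast
      then show "\<exists>i\<in>I. c i \<noteq> 0" using i0 by (intro bexI[of _ i]) (auto simp: c_def I'_def)
      show "\<forall>y\<in>insert x X. (\<Sum>i\<in>I. c i * d i y) = 0"
        using c' by (auto simp: key d'_def)
    qed
  qed
qed

lemma zspan_sum_aux:
  assumes "finite X"
  shows "set (map snd ps) \<subseteq> X \<Longrightarrow> \<exists>d. lincomb ps = (\<Sum>x\<in>X. zmult (d x) x)"
proof (induction ps)
  case Nil show ?case by (rule exI[of _ "\<lambda>_. 0"]) simp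
next
  case (Cons p ps)
  obtain n a where p: "p = (n, a)" by (cases p)
  have a: "a \<in> X" using Cons.prems p by simp
  have "set (map snd ps) \<subseteq> X" using Cons.prems by simp
  then obtain d where d: "lincomb ps = (\<Sum>x\<in>X. zmult (d x) x)" using Cons.IH by blast
  define d' where "d' x = d x + (if x = a then n else 0)" for x
  have "(\<Sum>x\<in>X. zmult (d' x) x) = (\<Sum>x\<in>X. zmult (d x) x + (if x = a then zmult n a else 0))"
    by (rule sum.cong) (auto simp: d'_def zmult_add)
  also have "\<dots> = (\<Sum>x\<in>X. zmult (d x) x) + zmult n a"
    using a assms by (simp add: sum.distrib)
  finally have "lincomb (p # ps) = (\<Sum>x\<in>X. zmult (d' x) x)"
    using d p by (simp add: add.commute)
  then show ?case by blast
qed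

lemma zspan_sum:
  assumes "finite X" "h \<in> zspan X"
  shows "\<exists>d. h = (\<Sum>x\<in>X. zmult (d x) x)"
  using assms zspan_sum_aux[OF assms(1)] unfolding zspan_def by blast

definition indep :: "'a::ab_group_add set \<Rightarrow> bool" where
  "indep B \<longleftrightarrow> (\<forall>c. (\<Sum>b\<in>B. zmult (c b) b) = 0 \<longrightarrow> (\<forall>b\<in>B. c b = 0))"

lemma indep_card:
  fixes X B :: "'a::ab_group_add set"
  assumes X: "finite X" "\<forall>h. \<exists>n::int. n \<noteq> 0 \<and> zmult n h \<in> zspan X"
    and B: "finite B" "indep B"
  shows "card B \<le> card X"
proof (rule ccontr)
  assume "\<not> card B \<le> card X"
  then have lt: "card X < card B" by simp
  have ex: "\<exists>p. fst p \<noteq> (0::int) \<and> zmult (fst p) b = (\<Sum>x\<in>X. zmult (snd p x) x)" for b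
  proof -
    obtain n where n: "n \<noteq> 0" "zmult n b \<in> zspan X" using X(2) by blast
    then obtain d where "zmult n b = (\<Sum>x\<in>X. zmult (d x) x)" using zspan_sum[OF X(1)] by blast
    then show ?thesis using n(1) by (intro exI[of _ "(n, d)"]) simp
  qed
  then have "\<forall>b. \<exists>p. fst p \<noteq> (0::int) \<and> zmult (fst p) b = (\<Sum>x\<in>X. zmult (snd p x) x)" by blast
  then obtain P where P: "\<forall>b. fst (P b) \<noteq> (0::int) \<and> zmult (fst (P b)) b = (\<Sum>x\<in>X. zmult (snd (P b) x) x)"
    by (rule choice[THEN exE])
  define n where "n b = fst (P b)" for b
  define d where "d b = snd (P b)" for b
  have nd: "\<And>b. n b \<noteq> (0::int)" "\<And>b. zmult (n b) b = (\<Sum>x\<in>X. zmult (d b x) x)"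
    using P unfolding n_def d_def by auto
  obtain c where c: "\<exists>i\<in>B. c i \<noteq> 0" "\<forall>x\<in>X. (\<Sum>i\<in>B. c i * d i x) = 0"
    using int_dep[OF X(1) B(1) lt, of d] by blast
  have "(\<Sum>b\<in>B. zmult (c b * n b) b) = (\<Sum>b\<in>B. \<Sum>x\<in>X. zmult (c b * d b x) x)"
    by (simp add: zmult_mult nd zmult_sum_right)
  also have "\<dots> = (\<Sum>x\<in>X. zmult (\<Sum>b\<in>B. c b * d b x) x)"
    by (subst sum.swap) (simp add: zmult_sum_left)
  also have "\<dots> = 0" using c(2) by simp
  finally have "\<forall>b\<in>B. c b * n b = 0"
    using B(2)[unfolded indep_def, rule_format, of "\<lambda>b. c b * n b"] by simp
  then show False using c(1) nd(1) by auto
qed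

lemma sum_in_Qk:
  assumes "finite I" "c0 \<noteq> 0" "zmult c0 a = (\<Sum>i\<in>I. zmult (c i) i)"
  shows "a \<in> Qk (nat (\<bar>c0\<bar> + (\<Sum>i\<in>I. \<bar>c i\<bar>))) I"
proof -
  obtain l where l: "set l = I" "distinct l" using finite_distinct_list[OF assms(1)] by blast
  define ps where "ps = map (\<lambda>i. (c i, i)) l"
  have "lincomb ps = sum_list (map (\<lambda>i. zmult (c i) i) l)"
    unfolding ps_def lincomb_def by (simp add: comp_def)
  also have "\<dots> = (\<Sum>i\<in>I. zmult (c i) i)" using l by (simp add: sum_list_distinct_conv_sum_set)
  finally have 1: "zmult c0 a = lincomb ps" using assms(3) by simp
  have "sum_list (map (\<lambda>p. \<bar>fst p\<bar>) ps) = (\<Sum>i\<in>I. \<bar>c i\<bar>)"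
    unfolding ps_def using l by (simp add: comp_def sum_list_distinct_conv_sum_set)
  moreover have "set (map snd ps) \<subseteq> I" using l by (auto simp: ps_def)
  moreover have "(\<Sum>i\<in>I. \<bar>c i\<bar>) \<ge> 0" by (simp add: sum_nonneg)
  ultimately show ?thesis using 1 assms(2) unfolding Qk_def
    by (intro CollectI exI[of _ c0] exI[of _ ps]) auto
qed

theorem proposition4p8:
  fixes rh :: "'g::monoid_mult \<Rightarrow> 'a::ab_group_add \<Rightarrow> 'a"
    and A :: "'a set"
  assumes "finitely_generated_monoid TYPE('g)"
    and "solenoid_dual TYPE('a)"
    and "dual_endo_action rh"
    and "rho_basis rh A"
  shows "\<exists>k>0. k_regular k A"
proof -
  obtain S :: "'g set" where S: "finite S" "\<And>g. \<exists>xs. set xs \<subseteq> S \<and> g = prod_list xs"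
    using assms(1) unfolding finitely_generated_monoid_def by blast
  obtain X :: "'a set" where X: "finite X" "\<forall>h. \<exists>n::int. n \<noteq> 0 \<and> zmult n h \<in> zspan X"
    using assms(2) unfolding solenoid_dual_def finite_rank_def by blast
  have add: "\<And>g x y. rh g (x + y) = rh g x + rh g y"
    and rh1: "rh 1 = id" and rhm: "\<And>g d x. rh (g * d) x = rh d (rh g x)"
    using assms(3) unfolding dual_endo_action_def by auto
  obtain F where F: "finite F" "A = (\<Union>g. rh g ` F)"
    using assms(4) unfolding rho_basis_def by blast
  define W where "W n = {xs. set xs \<subseteq> S \<and> length xs \<le> n}" for n
  define An where "An n = (\<lambda>(xs, f). rh (prod_list xs) f) ` (W n \<times> F)" for n
  have memAn: "y \<in> An n \<longleftrightarrow> (\<exists>xs f. set xs \<subseteq> S \<and> length xs \<le> n \<and> f \<in> F \<and> y = rh (prod_list xs) f)"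
    for y n unfolding An_def W_def by force
  have fin: "finite (An n)" for n
    unfolding An_def W_def using finite_lists_length_le[OF S(1)] F(1) by simp
  have mono: "An n \<subseteq> An m" if "n \<le> m" for n m
  proof
    fix y assume "y \<in> An n"
    then obtain xs f where "set xs \<subseteq> S" "length xs \<le> n" "f \<in> F" "y = rh (prod_list xs) f"
      unfolding memAn by blast
    then show "y \<in> An m" unfolding memAn using that by (intro exI[of _ xs] exI[of _ f]) simp
  qed
  have sub: "An n \<subseteq> A" for n
  proof
    fix y assume "y \<in> An n"
    then obtain xs f where "f \<in> F" "y = rh (prod_list xs) f" unfolding memAn by blast
    then show "y \<in> A" unfolding F(2) by blast
  qed
  have cover: "A \<subseteq> (\<Union>n. An n)"
  proof
    fix a assume "a \<in> A"
    then obtain g f where gf: "a = rh g f" "f \<in> F" using F(2) by blast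
    obtain xs where xs: "set xs \<subseteq> S" "g = prod_list xs" using S(2) by blast
    have "a \<in> An (length xs)" unfolding memAn using gf xs by blast
    then show "a \<in> (\<Union>n. An n)" by blast
  qed
  define Cs where "Cs = {card B | B. B \<subseteq> A \<and> finite B \<and> indep B}"
  have Cs_bd: "Cs \<subseteq> {..card X}"
  proof
    fix c assume "c \<in> Cs"
    then obtain B :: "'a set" where B0: "c = card B \<and> B \<subseteq> A \<and> finite B \<and> indep B"
      unfolding Cs_def mem_Collect_eq by (rule exE)
    then have B: "c = card B" "finite B" "indep B" by auto
    show "c \<in> {..card X}" using indep_card[OF X B(2) B(3)] B(1) by simp
  qed
  have finCs: "finite Cs" by (rule finite_subset[OF Cs_bd finite_atMost])
  have "indep ({}::'a set)" unfolding indep_def by simp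
  then have "0 \<in> Cs" unfolding Cs_def by (intro CollectI exI[of _ "{}::'a set"]) simp
  then have "Cs \<noteq> {}" by blast
  then have "Max Cs \<in> Cs" using finCs by (rule Max_in[rotated])
  then obtain I where I0: "Max Cs = card I \<and> I \<subseteq> A \<and> finite I \<and> indep I"
    unfolding Cs_def mem_Collect_eq by (rule exE)
  then have I: "I \<subseteq> A" "finite I" "indep I" "card I = Max Cs" by auto
  have maxI: "card B \<le> card I" if "B \<subseteq> A" "finite B" "indep B" for B
  proof -
    have "card B \<in> Cs" unfolding Cs_def using that by (intro CollectI exI[of _ B]) simp
    then show ?thesis using I(4) Max_ge[OF finCs] by simp
  qed
  have rel: "\<exists>c0 c. c0 \<noteq> 0 \<and> zmult c0 a = (\<Sum>i\<in>I. zmult (c i) i)" if a: "a \<in> A" for a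
  proof (cases "a \<in> I")
    case True
    have "(\<Sum>i\<in>I. zmult (if i = a then 1 else 0) i) = (\<Sum>i\<in>I. if i = a then a else 0)"
      by (rule sum.cong) auto
    also have "\<dots> = a" using True I(2) by simp
    finally show ?thesis by (intro exI[of _ 1] exI[of _ "\<lambda>i. if i = a then 1 else 0"]) simp
  next
    case False
    have "card (insert a I) > card I" using False I(2) by simp
    then have "\<not> indep (insert a I)" using maxI[of "insert a I"] I a by auto
    then obtain c where c: "(\<Sum>b\<in>insert a I. zmult (c b) b) = 0" "\<exists>b\<in>insert a I. c b \<noteq> 0"
      unfolding indep_def by blast
    have eq: "zmult (c a) a + (\<Sum>b\<in>I. zmult (c b) b) = 0" using c(1) False I(2) by simp
    have "c a \<noteq> 0"
    proof
      assume "c a = 0"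
      then have "(\<Sum>b\<in>I. zmult (c b) b) = 0" using eq by simp
      then have "\<forall>b\<in>I. c b = 0" using I(3)[unfolded indep_def, rule_format, of c] by simp
      then show False using c(2) \<open>c a = 0\<close> by auto
    qed
    moreover have "zmult (c a) a = (\<Sum>i\<in>I. zmult (- c i) i)"
      using eq by (simp add: zmult_neg sum_negf eq_neg_iff_add_eq_0)
    ultimately show ?thesis by (intro exI[of _ "c a"] exI[of _ "\<lambda>i. - c i"]) simp
  qed
  then have relQ: "\<exists>k. a \<in> Qk k I" if "a \<in> A" for a
    using sum_in_Qk[OF I(2)] that by meson
  have "\<forall>i\<in>I. \<exists>n. i \<in> An n" using I(1) cover by blast
  then obtain nf where nf0: "\<forall>i\<in>I. i \<in> An (nf i)" by (rule bchoice[THEN exE])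
  have nf: "\<And>i. i \<in> I \<Longrightarrow> i \<in> An (nf i)" using nf0 by blast
  define N where "N = Max (nf ` I)"
  have IN: "I \<subseteq> An N"
  proof
    fix i assume "i \<in> I"
    then have "nf i \<le> N" unfolding N_def using I(2) by simp
    then show "i \<in> An N" using mono nf \<open>i \<in> I\<close> by blast
  qed
  have "\<forall>a\<in>An (Suc N). \<exists>k. a \<in> Qk k I" using relQ sub by blast
  then obtain kf where kf0: "\<forall>a\<in>An (Suc N). a \<in> Qk (kf a) I" by (rule bchoice[THEN exE])
  have kf: "\<And>a. a \<in> An (Suc N) \<Longrightarrow> a \<in> Qk (kf a) I" using kf0 by blast
  define k where "k = Suc (Max (kf ` An (Suc N)))"
  have base: "An (Suc N) \<subseteq> Qk k (An N)"
  proof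
    fix a assume a: "a \<in> An (Suc N)"
    have "kf a \<le> k" unfolding k_def using fin a by (simp add: le_SucI)
    then show "a \<in> Qk k (An N)" using Qk_mono[OF _ IN] kf[OF a] by blast
  qed
  have step: "An (N + Suc i) \<subseteq> Qk k (An (N + i))" for i
  proof
    fix h assume "h \<in> An (N + Suc i)"
    then obtain xs f where xs: "h = rh (prod_list xs) f" "set xs \<subseteq> S" "length xs \<le> N + Suc i" "f \<in> F"
      unfolding memAn by blast
    define v where "v = take (Suc N) xs"
    define u where "u = drop (Suc N) xs"
    have "xs = v @ u" unfolding u_def v_def by simp
    then have "prod_list xs = prod_list v * prod_list u" by simp
    then have h: "h = rh (prod_list u) (rh (prod_list v) f)" using xs(1) rhm by metis
    have "set v \<subseteq> S" using xs(2) unfolding v_def by (auto dest: in_set_takeD)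
    moreover have "length v \<le> Suc N" unfolding v_def by simp
    ultimately have "rh (prod_list v) f \<in> An (Suc N)" unfolding memAn using xs(4)
      by (intro exI[of _ v] exI[of _ f]) simp
    then have "rh (prod_list v) f \<in> Qk k (An N)" using base by blast
    then have hQ: "h \<in> Qk k (rh (prod_list u) ` An N)" unfolding h by (rule Qk_hom[OF add])
    have sub2: "rh (prod_list u) ` An N \<subseteq> An (N + i)"
    proof
      fix y assume "y \<in> rh (prod_list u) ` An N"
      then obtain z where z: "z \<in> An N" "y = rh (prod_list u) z" by blast
      then obtain w f' where w0: "set w \<subseteq> S" "length w \<le> N" "f' \<in> F" "z = rh (prod_list w) f'"
        unfolding memAn by blast
      have w: "y = rh (prod_list u) (rh (prod_list w) f')" "set w \<subseteq> S" "length w \<le> N" "f' \<in> F"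
        using z w0 by auto
      have "y = rh (prod_list w * prod_list u) f'" using w(1) rhm by metis
      then have "y = rh (prod_list (w @ u)) f'" by simp
      moreover have "set (w @ u) \<subseteq> S" using w(2) xs(2) by (auto simp: u_def dest: in_set_dropD)
      moreover have "length (w @ u) \<le> N + i" using w(3) xs(3) by (simp add: u_def)
      ultimately show "y \<in> An (N + i)" unfolding memAn using w(4)
        by (intro exI[of _ "w @ u"] exI[of _ f']) simp
    qed
    show "h \<in> Qk k (An (N + i))" using Qk_mono[OF order_refl sub2] hQ by blast
  qed
  have "k_regular k A"
    unfolding k_regular_def
  proof (intro exI[of _ "\<lambda>i. An (N + i)"] conjI allI)
    show "(\<Union>i. An (N + i)) = A"
    proof
      show "(\<Union>i. An (N + i)) \<subseteq> A" using sub by blast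
      show "A \<subseteq> (\<Union>i. An (N + i))"
      proof
        fix a assume "a \<in> A"
        then obtain n where "a \<in> An n" using cover by blast
        moreover have "An n \<subseteq> An (N + n)" by (rule mono) simp
        ultimately show "a \<in> (\<Union>i. An (N + i))" by blast
      qed
    qed
    show "finite (An (N + i))" for i by (rule fin)
    show "An (N + i) \<subseteq> An (N + Suc i)" for i by (rule mono) simp
    show "An (N + i) \<subseteq> A" for i by (rule sub)
    show "An (N + Suc i) \<subseteq> Qk k (An (N + i))" for i by (rule step)
  qed
  moreover have "0 < k" unfolding k_def by simp
  ultimately show ?thesis by blast
qed

end
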